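(* Let $S$ be a smooth surface in $\mathbb{R}^3$ which satisfies $aH + bK = c$ for some real constants $a,b,c$ with $a^2+b^2\neq 0$, where $H$ and $K$ denote the mean curvature and the Gauss curvature of $S$. Suppose $S$ is foliated by pieces of circles lying in a one-parameter family of parallel planes. Then either $S$ is a piece of a surface of revolution, or $S$ is part of one of the Riemann minimal examples, or $S$ is part of a generalized cone.
   Context: A generalized cone is a surface foliated by circles in parallel planes whose centres lie on a straight line and whose radius is a linear function; locally, after a rigid motion, it can be parametrized by $\mathbf{X}(u,v) = (f(u), g(u), u) + r(u)(\cos v, \sin v, 0)$ with $f$, $g$ and $r>0$ linear (affine) functions of $u$. It has $K=0$. The Riemann minimal examples are the minimal surfaces ($H=0$) discovered by Riemann which are foliated by circles in parallel planes but are not surfaces of revolution; locally, after a rigid motion, they are parametrized as $\mathbf{X}(u,v) = (f(u), g(u), u) + r(u)(\cos v, \sin v, 0)$ with $f' = \lambda r^2$, $g' = \mu r^2$ for constants $\lambda,\mu$ with $\lambda^2+\mu^2\neq 0$, and $1+(\lambda^2+\mu^2)r^4 + r'^2 - r r'' = 0$. The circles in parallel planes are not assumed a priori to be coaxial. *)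

theory Defs
  imports "HOL-Analysis.Analysis" "HOL-Analysis.Cross3"
begin

definition smooth_on :: "real set \<Rightarrow> (real \<Rightarrow> real) \<Rightarrow> bool" where
  "smooth_on I h \<longleftrightarrow> (\<forall>n. \<forall>x\<in>I. ((deriv ^^ n) h) differentiable (at x))"

definition Xu :: "(real \<Rightarrow> real \<Rightarrow> real^3) \<Rightarrow> real \<Rightarrow> real \<Rightarrow> real^3" where
  "Xu X u v = vector_derivative (\<lambda>s. X s v) (at u)"
definition Xv :: "(real \<Rightarrow> real \<Rightarrow> real^3) \<Rightarrow> real \<Rightarrow> real \<Rightarrow> real^3" where
  "Xv X u v = vector_derivative (\<lambda>t. X u t) (at v)"
definition Xuu :: "(real \<Rightarrow> real \<Rightarrow> real^3) \<Rightarrow> real \<Rightarrow> real \<Rightarrow> real^3" where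
  "Xuu X u v = vector_derivative (\<lambda>s. Xu X s v) (at u)"
definition Xuv :: "(real \<Rightarrow> real \<Rightarrow> real^3) \<Rightarrow> real \<Rightarrow> real \<Rightarrow> real^3" where
  "Xuv X u v = vector_derivative (\<lambda>t. Xu X u t) (at v)"
definition Xvv :: "(real \<Rightarrow> real \<Rightarrow> real^3) \<Rightarrow> real \<Rightarrow> real \<Rightarrow> real^3" where
  "Xvv X u v = vector_derivative (\<lambda>t. Xv X u t) (at v)"

definition unit_normal :: "(real \<Rightarrow> real \<Rightarrow> real^3) \<Rightarrow> real \<Rightarrow> real \<Rightarrow> real^3" where
  "unit_normal X u v = (1 / norm (cross3 (Xu X u v) (Xv X u v))) *\<^sub>R cross3 (Xu X u v) (Xv X u v)"

definition fffE where "fffE X u v = Xu X u v \<bullet> Xu X u v"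
definition fffF where "fffF X u v = Xu X u v \<bullet> Xv X u v"
definition fffG where "fffG X u v = Xv X u v \<bullet> Xv X u v"
definition sffL where "sffL X u v = Xuu X u v \<bullet> unit_normal X u v"
definition sffM where "sffM X u v = Xuv X u v \<bullet> unit_normal X u v"
definition sffN where "sffN X u v = Xvv X u v \<bullet> unit_normal X u v"

definition gauss_curv :: "(real \<Rightarrow> real \<Rightarrow> real^3) \<Rightarrow> real \<Rightarrow> real \<Rightarrow> real" where
  "gauss_curv X u v =
     (sffL X u v * sffN X u v - (sffM X u v)\<^sup>2) /
     (fffE X u v * fffG X u v - (fffF X u v)\<^sup>2)"

definition mean_curv :: "(real \<Rightarrow> real \<Rightarrow> real^3) \<Rightarrow> real \<Rightarrow> real \<Rightarrow> real" where
  "mean_curv X u v =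
     (fffE X u v * sffN X u v - 2 * fffF X u v * sffM X u v + fffG X u v * sffL X u v) /
     (2 * (fffE X u v * fffG X u v - (fffF X u v)\<^sup>2))"

definition circle_surface ::
  "(real \<Rightarrow> real) \<Rightarrow> (real \<Rightarrow> real) \<Rightarrow> (real \<Rightarrow> real) \<Rightarrow> real \<Rightarrow> real \<Rightarrow> real^3" where
  "circle_surface f g r u v =
     vector [f u, g u, u] + r u *\<^sub>R vector [cos v, sin v, 0]"

definition affine_fun_on :: "real set \<Rightarrow> (real \<Rightarrow> real) \<Rightarrow> bool" where
  "affine_fun_on I h \<longleftrightarrow> (\<exists>\<alpha> \<beta>. \<forall>u\<in>I. h u = \<alpha> * u + \<beta>)"

end

theory Submission
  imports Defs "HOL-Complex_Analysis.Complex_Analysis"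
begin


lemma entire_zero_on_interval:
  fixes h :: "complex \<Rightarrow> complex"
  assumes hol: "h holomorphic_on UNIV" and e: "e > 0"
    and z: "\<And>x. \<bar>x - x0\<bar> < e \<Longrightarrow> h (of_real x) = 0"
  shows "h w = 0"
proof (rule analytic_continuation[OF hol open_UNIV connected_UNIV subset_UNIV, of "of_real x0" "of_real ` {x. \<bar>x - x0\<bar> < e}"])
  show "complex_of_real x0 islimpt complex_of_real ` {x. \<bar>x - x0\<bar> < e}"
    unfolding islimpt_approachable
  proof (intro allI impI)
    fix d :: real assume d: "d > 0"
    define y where "y = x0 + min e d / 2"
    have "\<bar>y - x0\<bar> < e" "y \<noteq> x0" "dist (complex_of_real y) (of_real x0) < d"
      using e d by (auto simp: y_def dist_norm)
    thus "\<exists>x'\<in>complex_of_real ` {x. \<bar>x - x0\<bar> < e}. x' \<noteq> complex_of_real x0 \<and> dist x' (complex_of_real x0) < d"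
      by (intro bexI[of _ "of_real y"]) auto
  qed
qed (use z in auto)



definition Ph :: "real \<Rightarrow> real \<Rightarrow> real \<Rightarrow> 'a::real_field \<Rightarrow> 'a \<Rightarrow> 'a \<Rightarrow> 'a" where
  "Ph p q s x y d = of_real p * x + of_real q * y + of_real s * d"
definition Qh :: "real \<Rightarrow> real \<Rightarrow> real \<Rightarrow> 'a::real_field \<Rightarrow> 'a \<Rightarrow> 'a \<Rightarrow> 'a" where
  "Qh p q s x y d = d^2 + (Ph p q s x y d)^2"
definition lh :: "real \<Rightarrow> real \<Rightarrow> real \<Rightarrow> 'a::real_field \<Rightarrow> 'a \<Rightarrow> 'a \<Rightarrow> 'a" where
  "lh F G R x y d = - (of_real F * x + of_real G * y + of_real R * d)"
definition Th :: "real \<Rightarrow> real \<Rightarrow> real \<Rightarrow> real \<Rightarrow> real \<Rightarrow> real \<Rightarrow> real \<Rightarrow> 'a::real_field \<Rightarrow> 'a \<Rightarrow> 'a \<Rightarrow> 'a" where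
  "Th r p q s F G R x y d = of_real (1 + p^2 + q^2 + s^2) * d + of_real (2 * s) * (of_real p * x + of_real q * y)
     + of_real r * lh F G R x y d"
definition SQh :: "real \<Rightarrow> real \<Rightarrow> real \<Rightarrow> real \<Rightarrow> real \<Rightarrow> real \<Rightarrow> real \<Rightarrow> real \<Rightarrow> real \<Rightarrow> real \<Rightarrow> 'a::real_field \<Rightarrow> 'a \<Rightarrow> 'a \<Rightarrow> 'a" where
  "SQh a b c r p q s F G R x y d = of_real (a^2) * (Th r p q s F G R x y d)^2 * Qh p q s x y d * d^4
     - (of_real (2 * c * r) * (Qh p q s x y d)^2 - of_real (2 * b) * lh F G R x y d * d^3)^2"
definition SQ0h :: "real \<Rightarrow> real \<Rightarrow> real \<Rightarrow> real \<Rightarrow> real \<Rightarrow> real \<Rightarrow> real \<Rightarrow> real \<Rightarrow> real \<Rightarrow> 'a::real_field \<Rightarrow> 'a \<Rightarrow> 'a \<Rightarrow> 'a" where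
  "SQ0h a b r p q s F G R x y d = of_real (a^2) * (Th r p q s F G R x y d)^2 * Qh p q s x y d
     - of_real (4 * b^2) * (lh F G R x y d)^2 * d^2"

lemmas hdefs = Ph_def Qh_def lh_def Th_def SQh_def SQ0h_def

lemma SQh_of_real: "of_real (SQh a b c r p q s F G R x y d) = (SQh a b c r p q s F G R (of_real x) (of_real y) (of_real d) :: 'a::real_field)"
  by (simp add: hdefs)
lemma SQ0h_of_real: "of_real (SQ0h a b r p q s F G R x y d) = (SQ0h a b r p q s F G R (of_real x) (of_real y) (of_real d) :: 'a::real_field)"
  by (simp add: hdefs)

lemma Ph_homog: "Ph p q s (k*x) (k*y) (k*d) = k * (Ph p q s x y d :: 'a::real_field)"
  by (simp add: Ph_def algebra_simps)
lemma Qh_homog: "Qh p q s (k*x) (k*y) (k*d) = k^2 * (Qh p q s x y d :: 'a::real_field)"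
  unfolding Qh_def Ph_homog by (simp add: algebra_simps power2_eq_square)
lemma lh_homog: "lh F G R (k*x) (k*y) (k*d) = k * (lh F G R x y d :: 'a::real_field)"
  by (simp add: lh_def algebra_simps)
lemma Th_homog: "Th r p q s F G R (k*x) (k*y) (k*d) = k * (Th r p q s F G R x y d :: 'a::real_field)"
  unfolding Th_def lh_homog by (simp add: algebra_simps)
lemma SQh_homog: "SQh a b c r p q s F G R (k*x) (k*y) (k*d) = k^8 * (SQh a b c r p q s F G R x y d :: 'a::real_field)"
proof -
  have e: "(A * (k * T)\<^sup>2 * (k\<^sup>2 * Q) * (k * d) ^ 4 - (C * (k\<^sup>2 * Q)\<^sup>2 - B * (k * L) * (k * d) ^ 3)\<^sup>2)
     = k^8 * (A * T\<^sup>2 * Q * d ^ 4 - (C * Q\<^sup>2 - B * L * d ^ 3)\<^sup>2)" for A B C T Q L :: 'a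
    by algebra
  show ?thesis unfolding SQh_def Qh_homog Th_homog lh_homog by (rule e)
qed
lemma SQ0h_homog: "SQ0h a b r p q s F G R (k*x) (k*y) (k*d) = k^4 * (SQ0h a b r p q s F G R x y d :: 'a::real_field)"
proof -
  have e: "A * (k * T)\<^sup>2 * (k\<^sup>2 * Q) - B * (k * L)\<^sup>2 * (k * d)\<^sup>2
     = k^4 * (A * T\<^sup>2 * Q - B * L\<^sup>2 * d\<^sup>2)" for A B T Q L d :: 'a
    by algebra
  show ?thesis unfolding SQ0h_def Qh_homog Th_homog lh_homog by (rule e)
qed

lemma SQh_hol: "(\<lambda>w. SQh a b c r p q s F G R (fx w) (fy w) (fd w) :: complex) holomorphic_on UNIV"
  if "fx holomorphic_on UNIV" "fy holomorphic_on UNIV" "fd holomorphic_on UNIV"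
  unfolding hdefs by (intro holomorphic_intros that)
lemma SQ0h_hol: "(\<lambda>w. SQ0h a b r p q s F G R (fx w) (fy w) (fd w) :: complex) holomorphic_on UNIV"
  if "fx holomorphic_on UNIV" "fy holomorphic_on UNIV" "fd holomorphic_on UNIV"
  unfolding hdefs by (intro holomorphic_intros that)



lemma circle_SQ:
  fixes a b c r p q s F G R :: real
  assumes e: "e > 0" and z: "\<And>v. \<bar>v - v0\<bar> < e \<Longrightarrow> SQh a b c r p q s F G R (cos v) (sin v) 1 = (0::real)"
    and xy: "x^2 + y^2 = 1"
  shows "SQh a b c r p q s F G R x y 1 = (0::real)"
proof -
  define h where "h w = (SQh a b c r p q s F G R (cos w) (sin w) 1 :: complex)" for w
  have hol: "h holomorphic_on UNIV" unfolding h_def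
    by (intro SQh_hol holomorphic_intros)
  have hr: "h (of_real v) = of_real (SQh a b c r p q s F G R (cos v) (sin v) 1)" for v
    by (simp add: h_def SQh_of_real cos_of_real sin_of_real)
  have all: "SQh a b c r p q s F G R (cos v) (sin v) 1 = (0::real)" for v
  proof -
    have "h (of_real v) = 0"
      by (rule entire_zero_on_interval[OF hol e, of v0]) (simp add: hr z)
    thus ?thesis by (simp add: hr)
  qed
  obtain t where "x = cos t" "y = sin t" using sincos_total_2pi[OF xy] by blast
  thus ?thesis using all by simp
qed

lemma circle_SQ0:
  fixes a b r p q s F G R :: real
  assumes e: "e > 0" and z: "\<And>v. \<bar>v - v0\<bar> < e \<Longrightarrow> SQ0h a b r p q s F G R (cos v) (sin v) 1 = (0::real)"
    and xy: "x^2 + y^2 = 1"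
  shows "SQ0h a b r p q s F G R x y 1 = (0::real)"
proof -
  define h where "h w = (SQ0h a b r p q s F G R (cos w) (sin w) 1 :: complex)" for w
  have hol: "h holomorphic_on UNIV" unfolding h_def
    by (intro SQ0h_hol holomorphic_intros)
  have hr: "h (of_real v) = of_real (SQ0h a b r p q s F G R (cos v) (sin v) 1)" for v
    by (simp add: h_def SQ0h_of_real cos_of_real sin_of_real)
  have all: "SQ0h a b r p q s F G R (cos v) (sin v) 1 = (0::real)" for v
  proof -
    have "h (of_real v) = 0"
      by (rule entire_zero_on_interval[OF hol e, of v0]) (simp add: hr z)
    thus ?thesis by (simp add: hr)
  qed
  obtain t where "x = cos t" "y = sin t" using sincos_total_2pi[OF xy] by blast
  thus ?thesis using all by simp
qed

lemma tpar_circle: "((1 - t^2) / (1 + t^2))^2 + (2*t / (1 + t^2))^2 = (1::real)"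
proof -
  have "1 + t^2 > 0" by (simp add: add_pos_nonneg)
  have "(1 - t^2)^2 + (2*t)^2 = (1 + t^2)^2" by algebra
  thus ?thesis using \<open>1 + t^2 > 0\<close> by (simp add: power_divide add_divide_distrib[symmetric])
qed

lemma t_SQ:
  fixes a b c r p q s F G R :: real
  assumes z: "\<And>x y. x^2 + y^2 = 1 \<Longrightarrow> SQh a b c r p q s F G R x y 1 = (0::real)"
  shows "SQh a b c r p q s F G R (2::complex) (2*\<i>) 0 = 0"
proof -
  define h where "h t = (SQh a b c r p q s F G R (1 - t^2) (2*t) (1 + t^2) :: complex)" for t
  have hol: "h holomorphic_on UNIV" unfolding h_def
    by (intro SQh_hol holomorphic_intros)
  have hz: "h (of_real t) = 0" for t
  proof -
    define D where "D = 1 + t^2"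
    have D: "D > 0" unfolding D_def by (simp add: add_pos_nonneg)
    have "SQh a b c r p q s F G R (1 - t^2) (2*t) D = SQh a b c r p q s F G R (D * ((1 - t^2)/D)) (D * (2*t/D)) (D * 1)"
      using D by simp
    also have "\<dots> = D^8 * SQh a b c r p q s F G R ((1 - t^2)/D) (2*t/D) 1" by (rule SQh_homog)
    also have "\<dots> = 0" using z[OF tpar_circle[of t, folded D_def]] by simp
    finally have "of_real (SQh a b c r p q s F G R (1 - t^2) (2*t) D) = (0::complex)" by (simp only: of_real_0)
    also have "of_real (SQh a b c r p q s F G R (1 - t^2) (2*t) D) = h (of_real t)"
      unfolding SQh_of_real h_def D_def by simp
    finally show ?thesis .
  qed
  have "h \<i> = 0" by (rule entire_zero_on_interval[OF hol, of 1 0 \<i>]) (simp_all add: hz)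
  thus ?thesis by (simp add: h_def)
qed

lemma t_SQ0:
  fixes a b r p q s F G R :: real
  assumes z: "\<And>x y. x^2 + y^2 = 1 \<Longrightarrow> SQ0h a b r p q s F G R x y 1 = (0::real)"
  shows "SQ0h a b r p q s F G R (2::complex) (2*\<i>) 0 = 0"
proof -
  define h where "h t = (SQ0h a b r p q s F G R (1 - t^2) (2*t) (1 + t^2) :: complex)" for t
  have hol: "h holomorphic_on UNIV" unfolding h_def
    by (intro SQ0h_hol holomorphic_intros)
  have hz: "h (of_real t) = 0" for t
  proof -
    define D where "D = 1 + t^2"
    have D: "D > 0" unfolding D_def by (simp add: add_pos_nonneg)
    have "SQ0h a b r p q s F G R (1 - t^2) (2*t) D = SQ0h a b r p q s F G R (D * ((1 - t^2)/D)) (D * (2*t/D)) (D * 1)"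
      using D by simp
    also have "\<dots> = D^4 * SQ0h a b r p q s F G R ((1 - t^2)/D) (2*t/D) 1" by (rule SQ0h_homog)
    also have "\<dots> = 0" using z[OF tpar_circle[of t, folded D_def]] by simp
    finally have "of_real (SQ0h a b r p q s F G R (1 - t^2) (2*t) D) = (0::complex)" by (simp only: of_real_0)
    also have "of_real (SQ0h a b r p q s F G R (1 - t^2) (2*t) D) = h (of_real t)"
      unfolding SQ0h_of_real h_def D_def by simp
    finally show ?thesis .
  qed
  have "h \<i> = 0" by (rule entire_zero_on_interval[OF hol, of 1 0 \<i>]) (simp_all add: hz)
  thus ?thesis by (simp add: h_def)
qed

lemma SQh_at_i:
  assumes "SQh a b c r p q s F G R (2::complex) (2*\<i>) 0 = 0" "c \<noteq> 0" "r \<noteq> 0"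
  shows "p = 0 \<and> q = 0"
proof -
  define B :: complex where "B = of_real p * 2 + of_real q * (2*\<i>)"
  have "SQh a b c r p q s F G R (2::complex) (2*\<i>) 0 = 0 - (of_real (2 * c * r) * B ^ 4) ^ 2"
    by (simp add: hdefs power_mult_distrib B_def)
  hence "B = 0" using assms by simp
  thus ?thesis by (simp add: complex_eq_iff B_def)
qed

lemma SQ0h_at_i:
  assumes "SQ0h a b r p q s F G R (2::complex) (2*\<i>) 0 = 0" "a \<noteq> 0"
  shows "(p = 0 \<and> q = 0) \<or> (2 * s * p - r * F = 0 \<and> 2 * s * q - r * G = 0)"
proof -
  define B :: complex where "B = of_real p * 2 + of_real q * (2*\<i>)"
  define A :: complex where "A = of_real (2 * s * p - r * F) * 2 + of_real (2 * s * q - r * G) * (2*\<i>)"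
  have "SQ0h a b r p q s F G R (2::complex) (2*\<i>) 0 = of_real (a^2) * A^2 * B^2"
    by (simp add: hdefs algebra_simps A_def B_def)
  hence "B = 0 \<or> A = 0"
    using assms by auto
  thus ?thesis by (auto simp: complex_eq_iff A_def B_def algebra_simps)
qed



lemma vec3_deriv:
  fixes A B C :: "real \<Rightarrow> real"
  assumes "(A has_real_derivative A') (at x)" "(B has_real_derivative B') (at x)" "(C has_real_derivative C') (at x)"
  shows "((\<lambda>s. vector [A s, B s, C s] :: real^3) has_vector_derivative vector [A', B', C']) (at x)"
proof -
  have eq: "(\<lambda>s. vector [A s, B s, C s] :: real^3) = (\<lambda>s. A s *\<^sub>R (vector [1,0,0] :: real^3) + B s *\<^sub>R vector [0,1,0] + C s *\<^sub>R vector [0,0,1])"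
    by (auto simp: vec_eq_iff forall_3 vector_3)
  have "((\<lambda>s. A s *\<^sub>R (vector [1,0,0] :: real^3) + B s *\<^sub>R vector [0,1,0] + C s *\<^sub>R vector [0,0,1]) has_vector_derivative
     (A x *\<^sub>R 0 + A' *\<^sub>R (vector [1,0,0] :: real^3) + (B x *\<^sub>R 0 + B' *\<^sub>R vector [0,1,0]) + (C x *\<^sub>R 0 + C' *\<^sub>R vector [0,0,1]))) (at x)"
    by (intro has_vector_derivative_add has_vector_derivative_scaleR assms has_vector_derivative_const)
  also have "(A x *\<^sub>R 0 + A' *\<^sub>R (vector [1,0,0] :: real^3) + (B x *\<^sub>R 0 + B' *\<^sub>R vector [0,1,0]) + (C x *\<^sub>R 0 + C' *\<^sub>R vector [0,0,1])) = vector [A', B', C']"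
    by (auto simp: vec_eq_iff forall_3 vector_3)
  finally show ?thesis unfolding eq .
qed

lemma cs_eq: "circle_surface f g r s t = vector [f s + r s * cos t, g s + r s * sin t, s]"
  by (auto simp: circle_surface_def vec_eq_iff forall_3 vector_3)

lemma Xu_formula:
  assumes "f differentiable (at u)" "g differentiable (at u)" "r differentiable (at u)"
  shows "Xu (circle_surface f g r) u v = vector [deriv f u + deriv r u * cos v, deriv g u + deriv r u * sin v, 1]"
proof -
  have "((\<lambda>s. circle_surface f g r s v) has_vector_derivative vector [deriv f u + deriv r u * cos v, deriv g u + deriv r u * sin v, 1]) (at u)"
    unfolding cs_eq
    using assms[THEN DERIV_deriv_iff_real_differentiable[THEN iffD2]]
    by (intro vec3_deriv derivative_eq_intros) auto
  thus ?thesis unfolding Xu_def by (rule vector_derivative_at)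
qed

lemma Xv_formula:
  shows "Xv (circle_surface f g r) u v = vector [- r u * sin v, r u * cos v, 0]"
proof -
  have "((\<lambda>t. circle_surface f g r u t) has_vector_derivative vector [- r u * sin v, r u * cos v, 0]) (at v)"
    unfolding cs_eq
    by (intro vec3_deriv derivative_eq_intros) auto
  thus ?thesis unfolding Xv_def by (rule vector_derivative_at)
qed

lemma Xvv_formula:
  shows "Xvv (circle_surface f g r) u v = vector [- r u * cos v, - r u * sin v, 0]"
proof -
  have "((\<lambda>t. Xv (circle_surface f g r) u t) has_vector_derivative vector [- r u * cos v, - r u * sin v, 0]) (at v)"
    unfolding Xv_formula
    by (intro vec3_deriv derivative_eq_intros) auto
  thus ?thesis unfolding Xvv_def by (rule vector_derivative_at)
qed

lemma Xuv_formula: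
  assumes "f differentiable (at u)" "g differentiable (at u)" "r differentiable (at u)"
  shows "Xuv (circle_surface f g r) u v = vector [- deriv r u * sin v, deriv r u * cos v, 0]"
proof -
  have "((\<lambda>t. Xu (circle_surface f g r) u t) has_vector_derivative vector [- deriv r u * sin v, deriv r u * cos v, 0]) (at v)"
    unfolding Xu_formula[OF assms]
    by (intro vec3_deriv derivative_eq_intros) auto
  thus ?thesis unfolding Xuv_def by (rule vector_derivative_at)
qed

lemma Xuu_formula:
  assumes I: "open I" "u \<in> I"
    and d: "\<And>x. x \<in> I \<Longrightarrow> f differentiable (at x) \<and> g differentiable (at x) \<and> r differentiable (at x)"
    and dd: "deriv f differentiable (at u)" "deriv g differentiable (at u)" "deriv r differentiable (at u)"
  shows "Xuu (circle_surface f g r) u v = vector [deriv (deriv f) u + deriv (deriv r) u * cos v, deriv (deriv g) u + deriv (deriv r) u * sin v, 0]"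
proof -
  have "((\<lambda>s. vector [deriv f s + deriv r s * cos v, deriv g s + deriv r s * sin v, 1] :: real^3) has_vector_derivative
      vector [deriv (deriv f) u + deriv (deriv r) u * cos v, deriv (deriv g) u + deriv (deriv r) u * sin v, 0]) (at u)"
    using dd[THEN DERIV_deriv_iff_real_differentiable[THEN iffD2]]
    by (intro vec3_deriv derivative_eq_intros) auto
  hence "((\<lambda>s. Xu (circle_surface f g r) s v) has_vector_derivative
      vector [deriv (deriv f) u + deriv (deriv r) u * cos v, deriv (deriv g) u + deriv (deriv r) u * sin v, 0]) (at u)"
    by (rule has_vector_derivative_transform_within_open[OF _ I]) (simp add: Xu_formula d)
  thus ?thesis unfolding Xuu_def by (rule vector_derivative_at)
qed



lemma curv_eq:
  fixes X :: "real \<Rightarrow> real \<Rightarrow> real^3"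
  assumes hu: "Xu X u v = vector [p + s*x, q + s*y, 1]"
   and hv: "Xv X u v = vector [- r*y, r*x, 0]"
   and huu: "Xuu X u v = vector [F + R*x, G + R*y, 0]"
   and huv: "Xuv X u v = vector [- s*y, s*x, 0]"
   and hvv: "Xvv X u v = vector [- r*x, - r*y, 0]"
   and xy: "x^2 + y^2 = 1" and r: "r > 0"
   and eqn: "a * mean_curv X u v + b * gauss_curv X u v = c"
  shows "SQh a b c r p q s F G R x y 1 = (0::real)"
proof -
  define P where "P = p*x + q*y + s"
  define Q where "Q = 1 + P^2"
  define l where "l = -(F*x + G*y + R)"
  define E0 where "E0 = 1 + p^2 + q^2 + s^2 + 2 * s * (p * x + q * y)"
  define w where "w = sqrt Q"
  have Q1: "Q \<ge> 1" unfolding Q_def by simp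
  have w: "w > 0" "w^2 = Q" using Q1 unfolding w_def by auto
  have cr: "cross3 (Xu X u v) (Xv X u v) = vector [- r*x, - r*y, r*P]"
  proof -
    have "(p + s * x) * (r * x) - (q + s * y) * - (r * y) = r * P"
      using xy unfolding P_def by algebra
    thus ?thesis unfolding hu hv by (simp add: cross3_def vec_eq_iff forall_3 vector_3)
  qed
  have inn: "cross3 (Xu X u v) (Xv X u v) \<bullet> cross3 (Xu X u v) (Xv X u v) = r^2 * Q"
  proof -
    have "(- r*x) * (- r*x) + (- r*y) * (-r*y) + (r*P) * (r*P) = r^2 * Q"
      using xy unfolding Q_def by algebra
    thus ?thesis unfolding cr by (simp add: inner_vec_def sum_3 vector_3)
  qed
  have nc: "norm (cross3 (Xu X u v) (Xv X u v)) = r * w"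
    unfolding norm_eq_sqrt_inner inn w_def using r by (simp add: real_sqrt_mult)
  have un: "unit_normal X u v = (1 / (r * w)) *\<^sub>R vector [- r*x, - r*y, r*P]"
    unfolding unit_normal_def nc by (simp only: cr)
  have L: "sffL X u v = l / w"
  proof -
    have "(F + R*x) * (- r*x) + (G + R*y) * (- r*y) = r * l"
      using xy unfolding l_def by algebra
    thus ?thesis unfolding sffL_def un huu using r w
      by (simp add: inner_vec_def sum_3 vector_3 field_simps)
  qed
  have M: "sffM X u v = 0"
    unfolding sffM_def un huv by (simp add: inner_vec_def sum_3 vector_3 algebra_simps)
  have N: "sffN X u v = r / w"
  proof -
    have "(- r*x) * (- r*x) + (- r*y) * (- r*y) = r * r" "r * (x * x) + r * (y * y) = r"
      using xy by algebra+
    thus ?thesis unfolding sffN_def un hvv using r w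
      by (simp add: inner_vec_def sum_3 vector_3 field_simps)
  qed
  have E: "fffE X u v = E0"
  proof -
    have "(p + s*x) * (p + s*x) + (q + s*y) * (q + s*y) + 1 = E0"
      using xy unfolding E0_def by algebra
    thus ?thesis unfolding fffE_def hu by (simp add: inner_vec_def sum_3 vector_3)
  qed
  have Ff: "fffF X u v = r * (q*x - p*y)"
    unfolding fffF_def hu hv by (simp add: inner_vec_def sum_3 vector_3 algebra_simps)
  have G: "fffG X u v = r^2"
  proof -
    have "(- r*y) * (- r*y) + (r*x) * (r*x) = r^2"
      using xy by algebra
    thus ?thesis unfolding fffG_def hv by (simp add: inner_vec_def sum_3 vector_3)
  qed
  have W: "E0 * r^2 - (r * (q*x - p*y))^2 = r^2 * Q"
    using xy unfolding E0_def Q_def P_def by algebra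
  have K: "gauss_curv X u v = l / (r * w^4)"
    unfolding gauss_curv_def L M N E Ff G W using r w
    by (simp add: field_simps power2_eq_square power4_eq_xxxx)
  have H: "mean_curv X u v = (E0 + r * l) / (2 * r * w^3)"
    unfolding mean_curv_def L M N E Ff G W using r w Q1
    by (simp add: field_simps power2_eq_square power3_eq_cube)
  have "a * (E0 + r*l) * w + 2 * b * l = 2 * c * r * w^4"
  proof -
    have "c * (2 * r * w^4) = (a * ((E0 + r * l) / (2 * r * w^3)) + b * (l / (r * w^4))) * (2 * r * w^4)"
      using eqn H K by simp
    also have "\<dots> = a * (E0 + r*l) * w + 2 * b * l"
      using r w(1) by (simp add: field_simps power2_eq_square power3_eq_cube power4_eq_xxxx)
    finally show ?thesis by simp
  qed
  moreover have w4: "w^4 = Q^2"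
  proof -
    have "w^4 = (w^2)^2" by (simp add: power_mult[symmetric])
    thus ?thesis using w(2) by simp
  qed
  ultimately have "a * (E0 + r*l) * w = 2 * c * r * Q^2 - 2 * b * l" by simp
  hence "(a * (E0 + r*l) * w)^2 = (2 * c * r * Q^2 - 2 * b * l)^2" by simp
  moreover have "(a * (E0 + r*l) * w)^2 = a^2 * (E0 + r*l)^2 * Q"
    using w(2) by (simp add: power_mult_distrib)
  ultimately have "a^2 * (E0 + r*l)^2 * Q = (2 * c * r * Q^2 - 2 * b * l)^2" by simp
  thus ?thesis unfolding hdefs Q_def P_def l_def E0_def
    by (simp add: algebra_simps)
qed



lemma alg3:
  fixes A B k R s \<rho> :: real
  assumes B: "B > 0" and \<rho>: "\<rho> > 0"
    and e1: "A * (1 + (\<rho> + s)^2) = B * (k * \<rho> + R)^2"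
    and e2: "A * (1 + (s - \<rho>)^2) = B * (R - k * \<rho>)^2"
    and e3: "A * (1 + s^2) = B * R^2"
  shows "A = 0 \<and> k = 0 \<and> R = 0"
proof -
  have "4 * \<rho> * (A * s) = 4 * \<rho> * (B * k * R)"
    using e1 e2 by algebra
  hence h1: "A * s = B * k * R" using \<rho> by simp
  have "2 * \<rho>^2 * A = 2 * \<rho>^2 * (B * k^2)"
    using e1 e2 e3 by algebra
  hence h2: "A = B * k^2" using \<rho> by simp
  have "B * (k^2 * (1 + s^2)) = B * R^2" using e3 h2 by (simp add: algebra_simps)
  hence h3: "k^2 * (1 + s^2) = R^2" using B by simp
  have h4: "k * (k * s - R) = 0" using h1 h2 B by (simp add: algebra_simps power2_eq_square)
  have k: "k = 0"
  proof (rule ccontr)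
    assume "k \<noteq> 0"
    hence "R = k * s" using h4 by simp
    hence "k^2 = 0" using h3 by (simp add: algebra_simps power2_eq_square)
    thus False using \<open>k \<noteq> 0\<close> by simp
  qed
  thus ?thesis using h2 h3 by simp
qed

lemma SQ0_special:
  assumes "r \<noteq> 0"
  shows "SQ0h a b r p q s (2 * s * p / r) (2 * s * q / r) R x y (1::real)
     = a^2 * (1 + p^2 + q^2 + s^2 - r * R)^2 * (1 + (p * x + q * y + s)^2) - 4 * b^2 * ((2 * s / r) * (p * x + q * y) + R)^2"
proof -
  have T: "Th r p q s (2 * s * p / r) (2 * s * q / r) R x y (1::real) = 1 + p^2 + q^2 + s^2 - r * R"
    using assms by (simp add: Th_def lh_def field_simps)
  have l: "lh (2 * s * p / r) (2 * s * q / r) R x y (1::real) = - ((2 * s / r) * (p * x + q * y) + R)"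
    using assms by (simp add: lh_def field_simps)
  have e: "(- z)^2 = z^2" for z :: real by simp
  show ?thesis unfolding SQ0h_def T l e by (simp add: Qh_def Ph_def)
qed

lemma ab_case:
  fixes a b r p q s R :: real
  assumes a: "a \<noteq> 0" and b: "b \<noteq> 0" and r: "r > 0"
    and z: "\<And>x y. x^2 + y^2 = 1 \<Longrightarrow> SQ0h a b r p q s (2 * s * p / r) (2 * s * q / r) R x y 1 = (0::real)"
  shows "p = 0 \<and> q = 0"
proof (rule ccontr)
  assume npq: "\<not> (p = 0 \<and> q = 0)"
  define \<rho> where "\<rho> = sqrt (p^2 + q^2)"
  have pq: "p^2 + q^2 > 0" using npq by (auto simp: add_pos_nonneg add_nonneg_pos)
  have \<rho>: "\<rho> > 0" "\<rho>^2 = p^2 + q^2" using pq unfolding \<rho>_def by auto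
  define A where "A = a^2 * (1 + p^2 + q^2 + s^2 - r * R)^2"
  define B where "B = 4 * b^2"
  define k where "k = 2 * s / r"
  have ev: "A * (1 + (p * x + q * y + s)^2) = B * (k * (p * x + q * y) + R)^2" if "x^2 + y^2 = 1" for x y
    using z[OF that] SQ0_special[of r a b p q s R x y] r unfolding A_def B_def k_def by simp
  have c1: "(p/\<rho>)^2 + (q/\<rho>)^2 = 1" "(-p/\<rho>)^2 + (-q/\<rho>)^2 = 1" "(-q/\<rho>)^2 + (p/\<rho>)^2 = 1"
    using \<rho> npq by (simp_all add: power_divide add_divide_distrib[symmetric])
  have w1: "p * (p/\<rho>) + q * (q/\<rho>) = \<rho>" using \<rho> by (simp add: field_simps power2_eq_square)
  have w2: "p * (-p/\<rho>) + q * (-q/\<rho>) = - \<rho>" using \<rho> by (simp add: field_simps power2_eq_square)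
  have w3: "p * (-q/\<rho>) + q * (p/\<rho>) = 0" using \<rho> by (simp add: field_simps)
  have e1: "A * (1 + (\<rho> + s)^2) = B * (k * \<rho> + R)^2" using ev[OF c1(1)] w1 by simp
  have "A * (1 + (- \<rho> + s)^2) = B * (k * (- \<rho>) + R)^2" using ev[OF c1(2)] unfolding w2 .
  hence e2: "A * (1 + (s - \<rho>)^2) = B * (R - k * \<rho>)^2" by (simp add: algebra_simps)
  have e3: "A * (1 + s^2) = B * R^2" using ev[OF c1(3)] w3 by simp
  have B: "B > 0" using b unfolding B_def by simp
  from alg3[OF B \<rho>(1) e1 e2 e3] have "A = 0" "k = 0" "R = 0" by auto
  hence "1 + p^2 + q^2 + s^2 = 0" using a unfolding A_def by simp
  moreover have "1 + p^2 + q^2 + s^2 > 0" by (simp add: add_pos_nonneg)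
  ultimately show False by simp
qed

lemma circle_three:
  fixes \<alpha> \<beta> \<gamma> :: real
  assumes "\<And>x y. x^2 + y^2 = 1 \<Longrightarrow> \<alpha> + \<beta> * x + \<gamma> * y = 0"
  shows "\<alpha> = 0 \<and> \<beta> = 0 \<and> \<gamma> = 0"
  using assms[of 1 0] assms[of "-1" 0] assms[of 0 1] by simp



lemma const_on:
  fixes h :: "real \<Rightarrow> real"
  assumes "convex I" "\<And>u. u \<in> I \<Longrightarrow> (h has_real_derivative 0) (at u)"
  shows "\<exists>c. \<forall>u\<in>I. h u = c"
  using has_field_derivative_zero_constant[OF assms(1)] assms(2) has_field_derivative_at_within by blast

lemma affine_from_dd:
  fixes h :: "real \<Rightarrow> real"
  assumes I: "convex I"
    and d: "\<And>u. u \<in> I \<Longrightarrow> h differentiable (at u)"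
    and dd: "\<And>u. u \<in> I \<Longrightarrow> deriv h differentiable (at u)"
    and z: "\<And>u. u \<in> I \<Longrightarrow> deriv (deriv h) u = 0"
  shows "affine_fun_on I h"
proof -
  have "\<exists>c. \<forall>u\<in>I. deriv h u = c"
    using const_on[OF I] dd z DERIV_deriv_iff_real_differentiable by metis
  then obtain \<alpha> where \<alpha>: "\<And>u. u \<in> I \<Longrightarrow> deriv h u = \<alpha>" by blast
  have "\<exists>c. \<forall>u\<in>I. h u - \<alpha> * u = c"
  proof (rule const_on[OF I])
    fix u assume u: "u \<in> I"
    have "(h has_real_derivative deriv h u) (at u)" using d[OF u] DERIV_deriv_iff_real_differentiable by blast
    hence "((\<lambda>u. h u - \<alpha> * u) has_real_derivative deriv h u - \<alpha> * 1) (at u)"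
      by (auto intro!: derivative_eq_intros)
    thus "((\<lambda>u. h u - \<alpha> * u) has_real_derivative 0) (at u)" using \<alpha>[OF u] by simp
  qed
  then obtain \<beta> where "\<And>u. u \<in> I \<Longrightarrow> h u - \<alpha> * u = \<beta>" by blast
  hence "\<forall>u\<in>I. h u = \<alpha> * u + \<beta>" by (metis add.commute diff_eq_eq)
  thus ?thesis unfolding affine_fun_on_def by blast
qed

lemma ratio_const:
  fixes h r h' r' :: "real \<Rightarrow> real"
  assumes I: "convex I"
    and dh: "\<And>u. u \<in> I \<Longrightarrow> (h has_real_derivative h' u) (at u)"
    and dr: "\<And>u. u \<in> I \<Longrightarrow> (r has_real_derivative r' u) (at u)"
    and r: "\<And>u. u \<in> I \<Longrightarrow> r u > 0"
    and e: "\<And>u. u \<in> I \<Longrightarrow> r u * h' u = 2 * r' u * h u"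
  shows "\<exists>lam. \<forall>u\<in>I. h u = lam * (r u)^2"
proof -
  have "\<exists>c. \<forall>u\<in>I. h u / (r u)^2 = c"
  proof (rule const_on[OF I])
    fix u assume u: "u \<in> I"
    have "((\<lambda>u. h u / (r u)^2) has_real_derivative
        (h' u * (r u)^2 - h u * (2 * r u * r' u)) / ((r u)^2)^2) (at u)"
      using dh[OF u] dr[OF u] r[OF u]
      by (auto intro!: derivative_eq_intros simp: power2_eq_square)
    moreover have "h' u * (r u)^2 - h u * (2 * r u * r' u) = 0"
      using e[OF u] by (simp add: power2_eq_square algebra_simps)
    ultimately show "((\<lambda>u. h u / (r u)^2) has_real_derivative 0) (at u)" by simp
  qed
  then obtain lam where lam: "\<And>u. u \<in> I \<Longrightarrow> h u / (r u)^2 = lam" by blast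
  have "\<forall>u\<in>I. h u = lam * (r u)^2"
  proof
    fix u assume u: "u \<in> I"
    have "(r u)^2 \<noteq> 0" using r[OF u] by simp
    thus "h u = lam * (r u)^2" using lam[OF u] by (simp add: field_simps)
  qed
  thus ?thesis by blast
qed



lemma SQh_c0: "SQh a b 0 r p q s F G R x y (1::real) = SQ0h a b r p q s F G R x y 1"
  by (simp add: SQh_def SQ0h_def power_mult_distrib)

theorem theorem1p3:
  fixes f g r :: "real \<Rightarrow> real" and \<Omega> :: "(real \<times> real) set" and a b c :: real
  assumes "open \<Omega>" and "connected \<Omega>" and "\<Omega> \<noteq> {}"
    and "smooth_on (fst ` \<Omega>) f" and "smooth_on (fst ` \<Omega>) g" and "smooth_on (fst ` \<Omega>) r"
    and "\<forall>u\<in>fst ` \<Omega>. r u > 0"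
    and "a\<^sup>2 + b\<^sup>2 \<noteq> 0"
    and "\<forall>(u, v)\<in>\<Omega>. a * mean_curv (circle_surface f g r) u v
                         + b * gauss_curv (circle_surface f g r) u v = c"
  shows "(\<exists>f0 g0. \<forall>u\<in>fst ` \<Omega>. f u = f0 \<and> g u = g0)
       \<or> (\<exists>lam mu. lam\<^sup>2 + mu\<^sup>2 \<noteq> 0 \<and>
            (\<forall>u\<in>fst ` \<Omega>. deriv f u = lam * (r u)\<^sup>2 \<and> deriv g u = mu * (r u)\<^sup>2 \<and>
               1 + (lam\<^sup>2 + mu\<^sup>2) * (r u) ^ 4 + (deriv r u)\<^sup>2
                 - r u * deriv (deriv r) u = 0))
       \<or> (affine_fun_on (fst ` \<Omega>) f \<and> affine_fun_on (fst ` \<Omega>) g \<and> affine_fun_on (fst ` \<Omega>) r)"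
proof -
  define I where "I = fst ` \<Omega>"
  have openI: "open I" unfolding I_def using assms(1) by (rule open_image_fst)
  have "connected I" unfolding I_def
    by (rule connected_continuous_image[OF continuous_on_fst[OF continuous_on_id] assms(2)])
  hence convI: "convex I" using is_interval_connected_1 is_interval_convex_1 by blast
  have rpos: "\<And>u. u \<in> I \<Longrightarrow> r u > 0" using assms(7) unfolding I_def by blast
  have sm: "\<And>h n u. smooth_on I h \<Longrightarrow> u \<in> I \<Longrightarrow> (deriv ^^ n) h differentiable (at u)"
    unfolding smooth_on_def by blast
  have d0: "\<And>u. u \<in> I \<Longrightarrow> f differentiable (at u) \<and> g differentiable (at u) \<and> r differentiable (at u)"
    using sm[where n=0] assms(4-6) unfolding I_def by simp
  have d1: "\<And>u. u \<in> I \<Longrightarrow> deriv f differentiable (at u) \<and> deriv g differentiable (at u) \<and> deriv r differentiable (at u)"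
    using sm[where n=1] assms(4-6) unfolding I_def by simp
  have Df: "\<And>u. u \<in> I \<Longrightarrow> (f has_real_derivative deriv f u) (at u)"
    and Dg: "\<And>u. u \<in> I \<Longrightarrow> (g has_real_derivative deriv g u) (at u)"
    and Dr: "\<And>u. u \<in> I \<Longrightarrow> (r has_real_derivative deriv r u) (at u)"
    and Df': "\<And>u. u \<in> I \<Longrightarrow> (deriv f has_real_derivative deriv (deriv f) u) (at u)"
    and Dg': "\<And>u. u \<in> I \<Longrightarrow> (deriv g has_real_derivative deriv (deriv g) u) (at u)"
    using d0 d1 DERIV_deriv_iff_real_differentiable by blast+
  have KEY: "SQh a b c (r u) (deriv f u) (deriv g u) (deriv r u) (deriv (deriv f) u) (deriv (deriv g) u) (deriv (deriv r) u) x y 1 = (0::real)"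
    if u: "u \<in> I" and xy: "x^2 + y^2 = 1" for u x y
  proof -
    obtain v0 where uv0: "(u, v0) \<in> \<Omega>" using u unfolding I_def by force
    obtain e where e: "e > 0" "ball (u, v0) e \<subseteq> \<Omega>" using assms(1) uv0 open_contains_ball by blast
    show ?thesis
    proof (rule circle_SQ[OF e(1) _ xy, of v0])
      fix v assume v: "\<bar>v - v0\<bar> < e"
      have "(u, v) \<in> ball (u, v0) e" using v by (simp add: dist_Pair_Pair dist_real_def abs_minus_commute)
      hence "(u, v) \<in> \<Omega>" using e(2) by blast
      hence eqn: "a * mean_curv (circle_surface f g r) u v + b * gauss_curv (circle_surface f g r) u v = c"
        using assms(9) by blast
      show "SQh a b c (r u) (deriv f u) (deriv g u) (deriv r u) (deriv (deriv f) u) (deriv (deriv g) u) (deriv (deriv r) u) (cos v) (sin v) 1 = 0"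
        using d0[OF u] d1[OF u]
        by (intro curv_eq[OF Xu_formula Xv_formula Xuu_formula[OF openI u d0] Xuv_formula Xvv_formula
              sin_cos_squared_add2 rpos[OF u] eqn]) auto
    qed
  qed
  have CONST: "\<exists>f0 g0. \<forall>u\<in>I. f u = f0 \<and> g u = g0" if z: "\<And>u. u \<in> I \<Longrightarrow> deriv f u = 0 \<and> deriv g u = 0"
  proof -
    have "\<exists>c. \<forall>u\<in>I. f u = c" using const_on[OF convI] Df z by metis
    moreover have "\<exists>c. \<forall>u\<in>I. g u = c" using const_on[OF convI] Dg z by metis
    ultimately show ?thesis by blast
  qed
  show ?thesis
  proof (cases "c = 0")
    case False
    have "deriv f u = 0 \<and> deriv g u = 0" if u: "u \<in> I" for u
    proof -
      have "r u \<noteq> 0" using rpos[OF u] by simp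
      moreover have "SQh a b c (r u) (deriv f u) (deriv g u) (deriv r u) (deriv (deriv f) u) (deriv (deriv g) u) (deriv (deriv r) u) (2::complex) (2*\<i>) 0 = 0"
        by (rule t_SQ) (rule KEY[OF u])
      ultimately show ?thesis using SQh_at_i False by blast
    qed
    thus ?thesis using CONST unfolding I_def by blast
  next
    case True
    have KEY0: "SQ0h a b (r u) (deriv f u) (deriv g u) (deriv r u) (deriv (deriv f) u) (deriv (deriv g) u) (deriv (deriv r) u) x y 1 = (0::real)"
      if u: "u \<in> I" and xy: "x^2 + y^2 = 1" for u x y
      using KEY[OF u xy] True SQh_c0 by simp
    show ?thesis
    proof (cases "a = 0")
      case a0: True
      hence b: "b \<noteq> 0" using assms(8) by auto
      have z: "deriv (deriv f) u = 0 \<and> deriv (deriv g) u = 0 \<and> deriv (deriv r) u = 0" if u: "u \<in> I" for u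
      proof -
        have "deriv (deriv r) u + deriv (deriv f) u * x + deriv (deriv g) u * y = 0" if xy: "x^2 + y^2 = 1" for x y
          using KEY0[OF u xy] a0 b by (simp add: hdefs algebra_simps)
        from circle_three[OF this] show ?thesis by simp
      qed
      have "affine_fun_on I f" "affine_fun_on I g" "affine_fun_on I r"
        using affine_from_dd[OF convI] d0 d1 z by blast+
      thus ?thesis unfolding I_def by blast
    next
      case a: False
      show ?thesis
      proof (cases "b = 0")
        case b0: True
        have z: "1 + (deriv f u)^2 + (deriv g u)^2 + (deriv r u)^2 - r u * deriv (deriv r) u = 0
             \<and> 2 * deriv r u * deriv f u - r u * deriv (deriv f) u = 0
             \<and> 2 * deriv r u * deriv g u - r u * deriv (deriv g) u = 0" if u: "u \<in> I" for u
        proof -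
          have "(1 + (deriv f u)^2 + (deriv g u)^2 + (deriv r u)^2 - r u * deriv (deriv r) u)
             + (2 * deriv r u * deriv f u - r u * deriv (deriv f) u) * x
             + (2 * deriv r u * deriv g u - r u * deriv (deriv g) u) * y = 0" if xy: "x^2 + y^2 = 1" for x y
          proof -
            have "Th (r u) (deriv f u) (deriv g u) (deriv r u) (deriv (deriv f) u) (deriv (deriv g) u) (deriv (deriv r) u) x y (1::real) = 0"
            proof -
              have Q: "Qh (deriv f u) (deriv g u) (deriv r u) x y (1::real) > 0"
                unfolding Qh_def by (simp add: add_pos_nonneg)
              have "a^2 * (Th (r u) (deriv f u) (deriv g u) (deriv r u) (deriv (deriv f) u) (deriv (deriv g) u) (deriv (deriv r) u) x y (1::real))^2
                  * Qh (deriv f u) (deriv g u) (deriv r u) x y (1::real) = 0"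
                using KEY0[OF u xy] b0 by (simp add: SQ0h_def)
              thus ?thesis using a Q by simp
            qed
            thus ?thesis by (simp add: Th_def lh_def algebra_simps)
          qed
          from circle_three[OF this] show ?thesis by simp
        qed
        obtain lam where lam: "\<forall>u\<in>I. deriv f u = lam * (r u)^2"
        proof -
          have "\<exists>lam. \<forall>u\<in>I. deriv f u = lam * (r u)^2"
          proof (rule ratio_const[OF convI Df' Dr rpos])
            fix u assume u: "u \<in> I"
            show "r u * deriv (deriv f) u = 2 * deriv r u * deriv f u" using z[OF u] by simp
          qed
          thus ?thesis using that by blast
        qed
        obtain mu where mu: "\<forall>u\<in>I. deriv g u = mu * (r u)^2"
        proof -
          have "\<exists>lam. \<forall>u\<in>I. deriv g u = lam * (r u)^2"
          proof (rule ratio_const[OF convI Dg' Dr rpos])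
            fix u assume u: "u \<in> I"
            show "r u * deriv (deriv g) u = 2 * deriv r u * deriv g u" using z[OF u] by simp
          qed
          thus ?thesis using that by blast
        qed
        show ?thesis
        proof (cases "lam^2 + mu^2 = 0")
          case True
          hence "lam = 0" "mu = 0" by (auto simp: add_nonneg_eq_0_iff)
          hence "deriv f u = 0 \<and> deriv g u = 0" if "u \<in> I" for u using lam mu that by simp
          thus ?thesis using CONST unfolding I_def by blast
        next
          case False
          have "\<forall>u\<in>I. deriv f u = lam * (r u)\<^sup>2 \<and> deriv g u = mu * (r u)\<^sup>2 \<and>
               1 + (lam\<^sup>2 + mu\<^sup>2) * (r u) ^ 4 + (deriv r u)\<^sup>2 - r u * deriv (deriv r) u = 0"
          proof
            fix u assume u: "u \<in> I"
            have "1 + (deriv f u)^2 + (deriv g u)^2 + (deriv r u)^2 - r u * deriv (deriv r) u = 0"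
              using z[OF u] by blast
            moreover have "(deriv f u)^2 + (deriv g u)^2 = (lam\<^sup>2 + mu\<^sup>2) * (r u) ^ 4"
              using lam mu u by (simp add: power_mult_distrib algebra_simps flip: power_mult)
            ultimately show "deriv f u = lam * (r u)\<^sup>2 \<and> deriv g u = mu * (r u)\<^sup>2 \<and>
               1 + (lam\<^sup>2 + mu\<^sup>2) * (r u) ^ 4 + (deriv r u)\<^sup>2 - r u * deriv (deriv r) u = 0"
              using lam mu u by simp
          qed
          thus ?thesis using False unfolding I_def by blast
        qed
      next
        case b: False
        have "deriv f u = 0 \<and> deriv g u = 0" if u: "u \<in> I" for u
        proof -
          from SQ0h_at_i[OF t_SQ0[OF KEY0[OF u]] a]
          show ?thesis
          proof
            assume h: "2 * deriv r u * deriv f u - r u * deriv (deriv f) u = 0 \<and> 2 * deriv r u * deriv g u - r u * deriv (deriv g) u = 0"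
            have r0: "r u \<noteq> 0" using rpos[OF u] by simp
            have F: "deriv (deriv f) u = 2 * deriv r u * deriv f u / r u" and G: "deriv (deriv g) u = 2 * deriv r u * deriv g u / r u"
              using h r0 by (simp_all add: field_simps)
            show ?thesis
            proof (rule ab_case[OF a b rpos[OF u], of "deriv f u" "deriv g u" "deriv r u" "deriv (deriv r) u"])
              fix x y :: real assume xy: "x^2 + y^2 = 1"
              show "SQ0h a b (r u) (deriv f u) (deriv g u) (deriv r u) (2 * deriv r u * deriv f u / r u)
                  (2 * deriv r u * deriv g u / r u) (deriv (deriv r) u) x y 1 = 0"
                using KEY0[OF u xy] unfolding F G .
            qed
          qed simp
        qed
        thus ?thesis using CONST unfolding I_def by blast
      qed
    qed
  qed
qed

end
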